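(* Let $A=(a_0,\dots,a_{n-1})$ be an array of pairwise distinct numbers, $k>1$, and consider two consecutive segments $(q,j,\cdot)$ and $(q',j',\cdot)$ added by Cover-exact$(A,k)$ in consecutive iterations. Let $X=(x_1,\dots,x_k)$ be the lexicographically minimal (with respect to the sequence of positions) increasing subsequence of length $k$ of $(a_q,\dots,a_j)$, and $X'=(x'_1,\dots,x'_k)$ the lexicographically minimal increasing subsequence of length $k$ of $(a_{q'},\dots,a_{j'})$, where $x_t,x'_t$ denote positions. Then $x'_i\ge x_{i+1}$ for all $1\le i<k$.
   Context: For $i\le j$, $\mathrm{LIS}(i,j)$ denotes the length of a longest increasing subsequence of $(a_i,\dots,a_j)$. Cover-exact$(A,k)$: set $C=\emptyset$, $i=0$. Repeat: let $j$ be the smallest index $\ge i$ with $\mathrm{LIS}(i,j)\ge k$; if none exists, return $C$. Let $q$ be the largest index $\le j$ with $\mathrm{LIS}(q,j)\ge k$. Add the segment $(q,j,L)$ to $C$, where $L$ is a longest increasing subsequence of $(a_q,\dots,a_j)$, and set $i=q+1$. *)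

theory Defs
  imports Complex_Main
begin

text \<open>The array A = (a_0,...,a_{n-1}) is modelled by a function a :: nat \<Rightarrow> real
  together with its length n. An increasing subsequence of (a_i,...,a_j) is
  represented by its strictly increasing list of positions in {i..j}.\<close>

definition inc_sub :: "(nat \<Rightarrow> real) \<Rightarrow> nat \<Rightarrow> nat \<Rightarrow> nat list \<Rightarrow> bool" where
  "inc_sub a i j xs \<longleftrightarrow> sorted_wrt (<) xs \<and> set xs \<subseteq> {i..j}
     \<and> sorted_wrt (\<lambda>p r. a p < a r) xs"

definition LIS :: "(nat \<Rightarrow> real) \<Rightarrow> nat \<Rightarrow> nat \<Rightarrow> nat" where
  "LIS a i j = Max (length ` {xs. inc_sub a i j xs})"

text \<open>One iteration of Cover-exact(A,k) started at index i: returns the segment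
  (q,j) it adds, or None if the algorithm terminates.\<close>

definition cover_step :: "(nat \<Rightarrow> real) \<Rightarrow> nat \<Rightarrow> nat \<Rightarrow> nat \<Rightarrow> (nat \<times> nat) option" where
  "cover_step a n k i =
    (if \<exists>j. i \<le> j \<and> j < n \<and> k \<le> LIS a i j then
       (let j = (LEAST j. i \<le> j \<and> j < n \<and> k \<le> LIS a i j);
            q = (GREATEST q. q \<le> j \<and> k \<le> LIS a q j)
        in Some (q, j))
     else None)"

text \<open>Values of the variable i at the start of some iteration of Cover-exact(A,k).\<close>

inductive cover_reach :: "(nat \<Rightarrow> real) \<Rightarrow> nat \<Rightarrow> nat \<Rightarrow> nat \<Rightarrow> bool"
  for a n k where
  start: "cover_reach a n k 0"
| step: "cover_reach a n k i \<Longrightarrow> cover_step a n k i = Some (q, j) \<Longrightarrow> cover_reach a n k (Suc q)"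

definition lexmin_inc_sub :: "(nat \<Rightarrow> real) \<Rightarrow> nat \<Rightarrow> nat \<Rightarrow> nat \<Rightarrow> nat list \<Rightarrow> bool" where
  "lexmin_inc_sub a k q j X \<longleftrightarrow> inc_sub a q j X \<and> length X = k \<and>
     (\<forall>Y. inc_sub a q j Y \<and> length Y = k \<longrightarrow> X = Y \<or> (X, Y) \<in> lexord {(x, y). x < y})"

end

theory Submission
  imports Defs
begin

lemma inc_sub_iff:
  "inc_sub a lo hi L \<longleftrightarrow> (\<forall>u<length L. lo \<le> L!u \<and> L!u \<le> hi) \<and>
     (\<forall>u. Suc u < length L \<longrightarrow> L!u < L!Suc u \<and> a (L!u) < a (L!Suc u))"
proof -
  have t1: "transp ((<) :: nat \<Rightarrow> nat \<Rightarrow> bool)" by (simp add: transp_def)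
  have t2: "transp (\<lambda>p r. a p < a (r::nat))" by (auto simp add: transp_def)
  show ?thesis
    unfolding inc_sub_def sorted_wrt_iff_nth_Suc_transp[OF t1] sorted_wrt_iff_nth_Suc_transp[OF t2]
    by (auto simp: in_set_conv_nth subset_iff)
qed

lemma inc_sub_nth:
  assumes "inc_sub a lo hi L" "u < v" "v < length L"
  shows "L!u < L!v" "a (L!u) < a (L!v)" "lo \<le> L!u" "L!v \<le> hi"
proof -
  have s: "sorted_wrt (<) L" "set L \<subseteq> {lo..hi}" "sorted_wrt (\<lambda>p r. a p < a r) L"
    using assms(1) by (auto simp: inc_sub_def)
  show "L!u < L!v" using sorted_wrt_nth_less[OF s(1) assms(2,3)] .
  show "a (L!u) < a (L!v)" using sorted_wrt_nth_less[OF s(3) assms(2,3)] .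
  have "L!u \<in> set L" "L!v \<in> set L" using assms by auto
  then show "lo \<le> L!u" "L!v \<le> hi" using s(2) by auto
qed

lemma inc_sub_nth_bounds:
  assumes "inc_sub a lo hi L" "u < length L"
  shows "lo \<le> L!u" "L!u \<le> hi"
proof -
  have "L!u \<in> set L" using assms by auto
  then show "lo \<le> L!u" "L!u \<le> hi" using assms(1) by (auto simp: inc_sub_def)
qed

lemma LIS_ge:
  assumes "inc_sub a lo hi L"
  shows "length L \<le> LIS a lo hi"
proof -
  have "{xs. inc_sub a lo hi xs} \<subseteq> {xs. set xs \<subseteq> {lo..hi} \<and> length xs \<le> card {lo..hi}}"
  proof
    fix xs assume "xs \<in> {xs. inc_sub a lo hi xs}"
    then have s: "sorted_wrt (<) xs" "set xs \<subseteq> {lo..hi}" by (auto simp: inc_sub_def)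
    then have "distinct xs" using strict_sorted_iff by blast
    then have "length xs = card (set xs)" by (simp add: distinct_card)
    also have "\<dots> \<le> card {lo..hi}" using s(2) card_mono[OF finite_atLeastAtMost] by blast
    finally show "xs \<in> {xs. set xs \<subseteq> {lo..hi} \<and> length xs \<le> card {lo..hi}}" using s by auto
  qed
  then have "finite {xs. inc_sub a lo hi xs}"
    using finite_lists_length_le[of "{lo..hi}" "card {lo..hi}"] finite_subset by blast
  then show ?thesis unfolding LIS_def using assms by auto
qed

lemma lexmin_contra:
  assumes X: "lexmin_inc_sub a k lo hi X" and Y: "inc_sub a lo hi Y" "length Y = k"
    and m: "m < k" "take m Y = take m X" "Y!m < X!m"
  shows False
proof -
  have lx: "length X = k" using X by (simp add: lexmin_inc_sub_def)
  have "X = Y \<or> (X, Y) \<in> lexord {(x, y). x < y}" using X Y by (simp add: lexmin_inc_sub_def)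
  moreover have "X \<noteq> Y" using m by auto
  ultimately have "(X, Y) \<in> lexord {(x, y). x < y}" by auto
  then obtain i where i: "i < k" "take i X = take i Y" "X!i < Y!i"
    using lx Y(2) by (auto simp: lexord_take_index_conv)
  show False
  proof (cases "i < m")
    case True
    then have "X!i = Y!i" using m(2) by (metis nth_take)
    then show ?thesis using i by simp
  next
    case False
    show ?thesis
    proof (cases "i = m")
      case True then show ?thesis using i m by simp
    next
      case False
      then have "m < i" using \<open>\<not> i < m\<close> by simp
      then have "X!m = Y!m" using i(2) by (metis nth_take)
      then show ?thesis using m by simp
    qed
  qed
qed

lemma inc_sub_map:
  assumes "\<And>u. u < m \<Longrightarrow> lo \<le> f u \<and> f u \<le> hi"
    and "\<And>u. Suc u < m \<Longrightarrow> f u < f (Suc u) \<and> a (f u) < a (f (Suc u))"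
  shows "inc_sub a lo hi (map f [0..<m])"
  unfolding inc_sub_iff using assms by simp

theorem lemma2:
  fixes a :: "nat \<Rightarrow> real" and n k i q j q' j' :: nat and X X' :: "nat list"
  assumes distinct: "inj_on a {..<n}"
    and k: "k > 1"
    and reach: "cover_reach a n k i"
    and seg1: "cover_step a n k i = Some (q, j)"
    and seg2: "cover_step a n k (Suc q) = Some (q', j')"
    and X: "lexmin_inc_sub a k q j X"
    and X': "lexmin_inc_sub a k q' j' X'"
  shows "\<forall>t. 1 \<le> t \<and> t < k \<longrightarrow> X' ! (t - 1) \<ge> X ! t"
proof (rule ccontr)
  assume "\<not> ?thesis"
  then have ex: "\<exists>t. 1 \<le> t \<and> t < k \<and> X' ! (t - 1) < X ! t" by auto
  have c1: "\<exists>j. i \<le> j \<and> j < n \<and> k \<le> LIS a i j"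
    using seg1 by (auto simp: cover_step_def split: if_splits)
  have jdef: "j = (LEAST j. i \<le> j \<and> j < n \<and> k \<le> LIS a i j)"
    and qdef: "q = (GREATEST q. q \<le> j \<and> k \<le> LIS a q j)"
    using seg1 c1 by (auto simp: cover_step_def Let_def)
  have c2: "\<exists>j. Suc q \<le> j \<and> j < n \<and> k \<le> LIS a (Suc q) j"
    using seg2 by (auto simp: cover_step_def split: if_splits)
  have j'def: "j' = (LEAST j. Suc q \<le> j \<and> j < n \<and> k \<le> LIS a (Suc q) j)"
    and q'def: "q' = (GREATEST q'. q' \<le> j' \<and> k \<le> LIS a q' j')"
    using seg2 c2 by (auto simp: cover_step_def Let_def)
  have jn: "j < n" using LeastI_ex[OF c1] jdef by simp
  have j'P: "Suc q \<le> j' \<and> j' < n \<and> k \<le> LIS a (Suc q) j'" using LeastI_ex[OF c2] j'def by simp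
  have F1: "lo \<le> q" if "inc_sub a lo j L" "k \<le> length L" "lo \<le> j" for lo L
  proof -
    have "k \<le> LIS a lo j" using LIS_ge[OF that(1)] that(2) by simp
    then show ?thesis unfolding qdef using that(3) by (intro Greatest_le_nat[where b=j]) auto
  qed
  have F2: "j' \<le> hi" if "inc_sub a (Suc q) hi L" "k \<le> length L" "Suc q \<le> hi" "hi < n" for hi L
  proof -
    have "k \<le> LIS a (Suc q) hi" using LIS_ge[OF that(1)] that(2) by simp
    then show ?thesis unfolding j'def using that(3,4) by (intro Least_le) auto
  qed
  have F3: "Suc q \<le> q'" unfolding q'def using j'P by (intro Greatest_le_nat[where b=j']) auto
  have Xs: "inc_sub a q j X" "length X = k" using X by (auto simp: lexmin_inc_sub_def)
  have X's: "inc_sub a q' j' X'" "length X' = k" using X' by (auto simp: lexmin_inc_sub_def)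
  have XI: "X!u < X!v \<and> a (X!u) < a (X!v)" if "u < v" "v < k" for u v
    using inc_sub_nth[OF Xs(1)] that Xs(2) by auto
  have XB: "q \<le> X!u \<and> X!u \<le> j" if "u < k" for u
    using inc_sub_nth_bounds[OF Xs(1)] that Xs(2) by auto
  have X'I: "X'!u < X'!v \<and> a (X'!u) < a (X'!v)" if "u < v" "v < k" for u v
    using inc_sub_nth[OF X's(1)] that X's(2) by auto
  have X'B: "q' \<le> X'!u \<and> X'!u \<le> j'" if "u < k" for u
    using inc_sub_nth_bounds[OF X's(1)] that X's(2) by auto
  have X0: "X!0 \<le> q"
  proof -
    have "inc_sub a (X!0) j X"
      unfolding inc_sub_iff
    proof (intro conjI allI impI)
      fix u assume u: "u < length X"
      show "X!0 \<le> X!u" using XI[of 0 u] u Xs(2) by (cases u) auto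
      show "X!u \<le> j" using XB[of u] u Xs(2) by auto
    next
      fix u assume "Suc u < length X"
      then show "X!u < X!Suc u" "a (X!u) < a (X!Suc u)" using XI[of u "Suc u"] Xs(2) by auto
    qed
    then show ?thesis using F1 XB[of 0] k Xs(2) by auto
  qed
  have A: "a (X!s) < a (X'!(s-1))" if s: "1 \<le> s" "s < k" "X'!(s-1) < X!s" for s
  proof (rule ccontr)
    have s1: "s - 1 < k" "s - 1 < s" using s by arith+
    assume "\<not> ?thesis"
    moreover have "a (X!s) \<noteq> a (X'!(s-1))"
    proof
      assume "a (X!s) = a (X'!(s-1))"
      moreover have "X!s < n" "X'!(s-1) < n" using XB[of s] X'B[of "s-1"] s s1 jn j'P by auto
      ultimately have "X!s = X'!(s-1)" using distinct by (auto dest: inj_onD)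
      then show False using s by simp
    qed
    ultimately have lt: "a (X'!(s-1)) < a (X!s)" by simp
    define L where "L = map (\<lambda>u. if u < s then X'!u else X!u) [0..<k]"
    have "inc_sub a q' j L"
      unfolding L_def
    proof (rule inc_sub_map)
      fix u assume u: "u < k"
      show "q' \<le> (if u < s then X'!u else X!u) \<and> (if u < s then X'!u else X!u) \<le> j"
      proof (cases "u < s")
        case True
        have "u < s - 1 \<or> u = s - 1" using True by arith
        moreover have "s - 1 < k" using s by arith
        ultimately have "X'!u \<le> X'!(s-1)" using X'I[of u "s-1"] by (auto simp: less_imp_le)
        then show ?thesis using True X'B[of u] XB[of s] s u by auto
      next
        case False
        have "X!s \<le> X!u" using XI[of s u] False u by (cases "u = s") auto
        then show ?thesis using False X'B[of "s-1"] XB[of u] s s1 u by auto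
      qed
    next
      fix u assume u: "Suc u < k"
      show "(if u < s then X'!u else X!u) < (if Suc u < s then X'!Suc u else X!Suc u) \<and>
          a (if u < s then X'!u else X!u) < a (if Suc u < s then X'!Suc u else X!Suc u)"
      proof (cases "Suc u < s")
        case True then show ?thesis using X'I[of u "Suc u"] u by auto
      next
        case False
        show ?thesis
        proof (cases "u < s")
          case True
          then have "u = s - 1" using False by simp
          then show ?thesis using True False s lt by auto
        next
          case False
          then show ?thesis using XI[of u "Suc u"] u by auto
        qed
      qed
    qed
    moreover have "q' \<le> j" using X'B[of "s-1"] XB[of s] s s1 by auto
    ultimately have "q' \<le> q" using F1[of q' L] by (simp add: L_def)
    then show False using F3 by simp
  qed
  define S where "S = {s. 1 \<le> s \<and> s < k \<and> X'!(s-1) < X!s}"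
  have Sfin: "finite S" unfolding S_def by (rule finite_subset[of _ "{..<k}"]) auto
  have Sne: "S \<noteq> {}" using ex unfolding S_def by auto
  define t where "t = Max S"
  have tS: "t \<in> S" unfolding t_def using Sfin Sne by simp
  have tmax: "s \<le> t" if "s \<in> S" for s unfolding t_def using Sfin that by simp
  have t: "1 \<le> t" "t < k" "X'!(t-1) < X!t" using tS unfolding S_def by auto
  define P where "P = (\<lambda>r. 1 \<le> r \<and> r \<le> t \<and> (\<forall>s. r \<le> s \<and> s \<le> t \<longrightarrow> s \<in> S))"
  define r where "r = (LEAST r. P r)"
  have Pt: "P t" unfolding P_def using tS t by auto
  have Pr: "P r" unfolding r_def using Pt by (rule LeastI)
  have r: "1 \<le> r" "r \<le> t" "\<And>s. r \<le> s \<Longrightarrow> s \<le> t \<Longrightarrow> s \<in> S" using Pr unfolding P_def by auto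
  have rS: "r \<in> S" using r by auto
  have rmin: "r - 1 \<notin> S" if "2 \<le> r"
  proof
    assume "r - 1 \<in> S"
    moreover have "s \<in> S" if "r - 1 \<le> s" "s \<le> t" "s \<noteq> r - 1" for s
      using r(3)[of s] that by simp
    ultimately have "P (r - 1)" unfolding P_def using r that by (metis le_diff_iff' less_imp_diff_less nat_le_linear  one_add_one  order_trans le_add1 diff_le_self order_le_less_trans less_le_not_le add_le_imp_le_diff)
    then have "r \<le> r - 1" unfolding r_def by (rule Least_le)
    then show False using that by simp
  qed
  have J1: "X!(r-1) < X'!(r-1)"
  proof (cases "r = 1")
    case True
    then show ?thesis using X0 F3 X'B[of 0] k by auto
  next
    case False
    then have r2: "2 \<le> r" using r by simp
    have "\<not> X'!(r-1-1) < X!(r-1)" using rmin[OF r2] r2 r t unfolding S_def by auto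
    moreover have "X'!(r-1-1) < X'!(r-1)" using X'I[of "r-1-1" "r-1"] r2 r t by auto
    ultimately show ?thesis by simp
  qed
  have r1: "r - 1 < r" "r < k" using r t by auto
  show False
  proof (cases "t = k - 1 \<or> a (X'!(t-1)) < a (X!(Suc t))")
    case True
    define f where "f = (\<lambda>u. if u < r then X!u else if u \<le> t then X'!(u-1) else X!u)"
    define Z where "Z = map f [0..<k]"
    have Zinc: "inc_sub a q j Z" unfolding Z_def
    proof (rule inc_sub_map)
      fix u assume u: "u < k"
      show "q \<le> f u \<and> f u \<le> j"
      proof (cases "r \<le> u \<and> u \<le> t")
        case True
        then have "u \<in> S" using r by auto
        then have "X'!(u-1) < X!u" "u - 1 < k" unfolding S_def by auto
        then show ?thesis using True X'B[of "u-1"] XB[of u] F3 u unfolding f_def by auto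
      next
        case False
        then show ?thesis using XB[of u] u unfolding f_def by auto
      qed
    next
      fix u assume u: "Suc u < k"
      show "f u < f (Suc u) \<and> a (f u) < a (f (Suc u))"
      proof -
        consider "Suc u < r" | "Suc u = r" | "r \<le> u \<and> Suc u \<le> t" | "u = t" | "t < u"
          by linarith
        then show ?thesis
        proof cases
          case 1 then show ?thesis using XI[of u "Suc u"] u unfolding f_def by auto
        next
          case 2
          have "a (X!(r-1)) < a (X!r)" using XI[of "r-1" r] r1 by auto
          then show ?thesis using 2 J1 A[of r] rS r r1 unfolding f_def S_def by auto
        next
          case 3
          have "u - 1 < u" "u < k" using 3 r u by auto
          then show ?thesis using 3 r X'I[of "u-1" u] unfolding f_def by auto
        next
          case 4
          then have "a (X'!(t-1)) < a (X!(Suc t))" using True u by auto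
          moreover have "X!t < X!(Suc t)" using XI[of t "Suc t"] u 4 by auto
          ultimately show ?thesis using 4 t r unfolding f_def by auto
        next
          case 5 then show ?thesis using XI[of u "Suc u"] u r unfolding f_def by auto
        qed
      qed
    qed
    have "take r Z = take r X"
      by (rule nth_equalityI) (use r1 Xs(2) in \<open>auto simp: Z_def f_def\<close>)
    moreover have "Z!r < X!r" using rS r1 r unfolding Z_def f_def S_def by auto
    ultimately show False using lexmin_contra[OF X Zinc _ r1(2)] by (simp add: Z_def)
  next
    case False
    have tk: "Suc t < k" using False t by auto
    have t1: "t - 1 < t" using t by auto
    have ne: "X!(Suc t) \<noteq> X'!(t-1)" using XI[of t "Suc t"] t tk by auto
    have "X!(Suc t) < n" "X'!(t-1) < n" using XB[of "Suc t"] X'B[of "t-1"] tk t1 jn j'P by auto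
    then have "a (X!(Suc t)) \<noteq> a (X'!(t-1))" using ne distinct by (auto dest: inj_onD)
    then have v1: "a (X!(Suc t)) < a (X'!(t-1))" using False by auto
    have "Suc t \<notin> S" using tmax[of "Suc t"] by auto
    then have "X!(Suc t) \<le> X'!t" using tk unfolding S_def by auto
    moreover have v2: "a (X'!(t-1)) < a (X'!t)" using X'I[of "t-1" t] t1 t by auto
    ultimately have p1: "X!(Suc t) < X'!t" using v1 by (cases "X!(Suc t) = X'!t") auto
    define g where "g = (\<lambda>u. if u \<le> t then X!(Suc u) else X'!(u-1))"
    define W where "W = map g [0..<k]"
    have jl: "X'!(k-1) \<le> j'" using X'B[of "k-1"] k by auto
    have Winc: "inc_sub a (Suc q) (j' - 1) W" unfolding W_def
    proof (rule inc_sub_map)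
      fix u assume u: "u < k"
      show "Suc q \<le> g u \<and> g u \<le> j' - 1"
      proof (cases "u \<le> t")
        case True
        have "X!0 < X!(Suc u)" using XI[of 0 "Suc u"] True tk by auto
        moreover have "X!(Suc u) \<le> X!(Suc t)" using XI[of "Suc u" "Suc t"] True tk
          by (cases "u = t") auto
        moreover have "X'!t < X'!(k-1)" using X'I[of t "k-1"] tk by auto
        ultimately show ?thesis using True XB[of 0] p1 jl k unfolding g_def by auto
      next
        case False
        have "X'!(u-1) < X'!(k-1)" using X'I[of "u-1" "k-1"] False u by auto
        moreover have "u - 1 < k" using u by arith
        ultimately show ?thesis using False X'B[of "u-1"] F3 jl u unfolding g_def by auto
      qed
    next
      fix u assume u: "Suc u < k"
      show "g u < g (Suc u) \<and> a (g u) < a (g (Suc u))"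
      proof -
        consider "Suc u \<le> t" | "u = t" | "t < u" by linarith
        then show ?thesis
        proof cases
          case 1 then show ?thesis using XI[of "Suc u" "Suc (Suc u)"] tk unfolding g_def by auto
        next
          case 2 then show ?thesis using p1 v1 v2 unfolding g_def by auto
        next
          case 3
          then have "u - 1 < u" by auto
          then show ?thesis using 3 X'I[of "u-1" u] u unfolding g_def by auto
        qed
      qed
    qed
    have "Suc q \<le> W!0 \<and> W!0 \<le> j' - 1" using inc_sub_nth_bounds[OF Winc, of 0] k
      by (simp add: W_def)
    then have "Suc q \<le> j' - 1" by simp
    moreover have "j' - 1 < n" using j'P by auto
    ultimately have "j' \<le> j' - 1" using F2[OF Winc] by (simp add: W_def)
    then show False using j'P by linarith
  qed
qed

end
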